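(* Let $\mathrm P$ be a polymatroid on $E$ of rank $r\le n$. Then in the polytope algebra $\overline{\mathbb I}(\Sigma_{\widetilde E})$ one has $[I(\pi^*(\mathrm P))]=[I(\mathrm M_\pi(\mathrm P))]+\sum_k a_k[I(\mathrm M_k)]$ for some integers $a_k$ and matroids $\mathrm M_k$ on $\widetilde E$ each of rank strictly less than $r$.
   Context: $E=\{1,\dots,m\}$, $\widetilde E$ an $n$-element set, $\pi:\widetilde E\to E$ a map, $\mathbf e_U=\sum_{j\in U}\mathbf e_j$. A polymatroid on $E$ is a submodular monotone $\operatorname{rk}_{\mathrm P}:2^E\to\mathbb Z_{\ge0}$ with $\operatorname{rk}_{\mathrm P}(\emptyset)=0$; rank $\operatorname{rk}_{\mathrm P}(E)$; independence polytope $I(\mathrm P)=\{x\ge0:\sum_{i\in S}x_i\le\operatorname{rk}_{\mathrm P}(S)\ \forall S\}$ (a matroid is the case where all singletons have rank $\le1$). The expansion $\pi^*(\mathrm P)$ is the polymatroid on $\widetilde E$ with rank $U\mapsto\operatorname{rk}_{\mathrm P}(\pi(U))$. The multisymmetric lift $\mathrm M_\pi(\mathrm P)$ is the matroid on $\widetilde E$ with rank $U\mapsto\min_{A\subseteq E}\{\operatorname{rk}_{\mathrm P}(A)+|U\setminus\pi^{-1}(A)|\}$. The stellahedral fan $\Sigma_{\widetilde E}$ in $\mathbb R^{\widetilde E}$ has cones $\operatorname{cone}(-\mathbf e_{\widetilde E\setminus F_1},\dots,-\mathbf e_{\widetilde E\setminus F_k},\mathbf e_j:j\in I)$ for chains $F_1\subsetneq\dots\subsetneq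 F_k\subsetneq\widetilde E$ and $I\subseteq F_1$ (with $F_1=\widetilde E$ if $k=0$). For a unimodular projective fan $\Sigma$ in $\mathbb R^\ell$, the polytope algebra $\overline{\mathbb I}(\Sigma)$ is the group generated by indicator functions $\mathbf 1_Q$ of lattice polytopes $Q$ whose normal fan coarsens $\Sigma$, modulo $\mathbf 1_Q-\mathbf 1_{Q+u}$, $u\in\mathbb Z^\ell$; $[Q]$ denotes the class of $\mathbf 1_Q$. *)

theory Defs
  imports "HOL-Analysis.Analysis"
begin

definition polymatroid :: "'a set \<Rightarrow> ('a set \<Rightarrow> nat) \<Rightarrow> bool" where
  "polymatroid E rk \<longleftrightarrow>
     rk {} = 0 \<and>
     (\<forall>A B. A \<subseteq> B \<and> B \<subseteq> E \<longrightarrow> rk A \<le> rk B) \<and>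
     (\<forall>A B. A \<subseteq> E \<and> B \<subseteq> E \<longrightarrow> rk (A \<union> B) + rk (A \<inter> B) \<le> rk A + rk B)"

definition matroid :: "'a set \<Rightarrow> ('a set \<Rightarrow> nat) \<Rightarrow> bool" where
  "matroid E rk \<longleftrightarrow> polymatroid E rk \<and> (\<forall>j\<in>E. rk {j} \<le> 1)"

definition indep_polytope :: "('e::finite set \<Rightarrow> nat) \<Rightarrow> (real^'e) set" where
  "indep_polytope rk = {x. (\<forall>i. 0 \<le> x $ i) \<and> (\<forall>S. (\<Sum>i\<in>S. x $ i) \<le> real (rk S))}"

definition expansion :: "('e \<Rightarrow> 'b) \<Rightarrow> ('b set \<Rightarrow> nat) \<Rightarrow> ('e set \<Rightarrow> nat)" where
  "expansion \<pi> rk = (\<lambda>U. rk (\<pi> ` U))"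

definition multisym_lift :: "'b set \<Rightarrow> ('e \<Rightarrow> 'b) \<Rightarrow> ('b set \<Rightarrow> nat) \<Rightarrow> ('e set \<Rightarrow> nat)" where
  "multisym_lift E \<pi> rk = (\<lambda>U. Min {rk A + card (U - \<pi> -` A) | A. A \<subseteq> E})"

definition indvec :: "'e::finite set \<Rightarrow> real^'e" where
  "indvec S = (\<chi> j. if j \<in> S then 1 else 0)"

text \<open>Generators of the cone of the stellahedral fan indexed by a chain \<F> of proper
  subsets of UNIV (strictly nested, i.e. totally ordered by inclusion) and a set
  I \<subseteq> F_1 = \<Inter>\<F> (with F_1 = UNIV when the chain is empty).\<close>
definition stell_cone_data :: "'e::finite set set \<Rightarrow> 'e set \<Rightarrow> bool" where
  "stell_cone_data \<F> I \<longleftrightarrow>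
     (\<forall>F\<in>\<F>. F \<noteq> UNIV) \<and> (\<forall>F\<in>\<F>. \<forall>G\<in>\<F>. F \<subseteq> G \<or> G \<subseteq> F) \<and> I \<subseteq> \<Inter>\<F>"

definition stell_cone_gens :: "'e::finite set set \<Rightarrow> 'e set \<Rightarrow> (real^'e) set" where
  "stell_cone_gens \<F> I = {- indvec (UNIV - F) | F. F \<in> \<F>} \<union> {indvec {j} | j. j \<in> I}"

definition stell_cone :: "'e::finite set set \<Rightarrow> 'e set \<Rightarrow> (real^'e) set" where
  "stell_cone \<F> I = cone hull (stell_cone_gens \<F> I)"

text \<open>The (inner) normal fan of Q is coarsened by the stellahedral fan iff every cone of
  the stellahedral fan is contained in a cone of the normal fan, i.e. there is a point
  of Q minimizing every linear functional of the cone simultaneously.\<close>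
definition normal_fan_coarsens_stell :: "(real^'e::finite) set \<Rightarrow> bool" where
  "normal_fan_coarsens_stell Q \<longleftrightarrow>
     (\<forall>\<F> I. stell_cone_data \<F> I \<longrightarrow>
        (\<exists>x\<in>Q. \<forall>w\<in>stell_cone \<F> I. \<forall>y\<in>Q. w \<bullet> x \<le> w \<bullet> y))"

definition integral_vec :: "real^'e::finite \<Rightarrow> bool" where
  "integral_vec v \<longleftrightarrow> (\<forall>i. v $ i \<in> \<int>)"

definition lattice_polytope :: "(real^'e::finite) set \<Rightarrow> bool" where
  "lattice_polytope Q \<longleftrightarrow>
     (\<exists>V. finite V \<and> V \<noteq> {} \<and> (\<forall>v\<in>V. integral_vec v) \<and> Q = convex hull V)"

definition stell_admissible :: "(real^'e::finite) set \<Rightarrow> bool" where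
  "stell_admissible Q \<longleftrightarrow> lattice_polytope Q \<and> normal_fan_coarsens_stell Q"

definition indic :: "(real^'e::finite) set \<Rightarrow> real^'e \<Rightarrow> int" where
  "indic Q = (\<lambda>x. if x \<in> Q then 1 else 0)"

text \<open>The subgroup generated by the translation relations 1_Q - 1_{Q+u}, Q admissible,
  u integral. Two integer combinations of indicator functions define the same element of
  the polytope algebra iff their difference lies in this subgroup.\<close>
inductive_set stell_translation_rel :: "(real^'e::finite \<Rightarrow> int) set" where
  zero: "(\<lambda>_. 0) \<in> stell_translation_rel"
| step: "f \<in> stell_translation_rel \<Longrightarrow> stell_admissible Q \<Longrightarrow> integral_vec u \<Longrightarrow>
         (\<lambda>x. f x + c * (indic Q x - indic ((\<lambda>y. y + u) ` Q) x)) \<in> stell_translation_rel"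

end

theory Submission
  imports Defs "HOL-Library.FuncSet"
begin

definition pm :: "('e set \<Rightarrow> int) \<Rightarrow> bool" where
  "pm g \<longleftrightarrow> g {} = 0 \<and> (\<forall>A B. A \<subseteq> B \<longrightarrow> g A \<le> g B) \<and>
     (\<forall>A B. g (A \<union> B) + g (A \<inter> B) \<le> g A + g B)"

definition PP :: "('e::finite set \<Rightarrow> int) \<Rightarrow> (real^'e) set" where
  "PP g = {y. (\<forall>i. 0 \<le> y$i) \<and> (\<forall>S. (\<Sum>i\<in>S. y$i) \<le> of_int (g S))}"

fun gr :: "('e set \<Rightarrow> int) \<Rightarrow> 'e list \<Rightarrow> 'e \<Rightarrow> int" where
  "gr g [] = (\<lambda>_. 0)"
| "gr g (e#xs) = (gr g xs)(e := g (insert e (set xs)) - g (set xs))"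

lemma pm_mono: "pm g \<Longrightarrow> A \<subseteq> B \<Longrightarrow> g A \<le> g B" by (auto simp: pm_def)
lemma pm_sub: "pm g \<Longrightarrow> g (A \<union> B) + g (A \<inter> B) \<le> g A + g B" by (auto simp: pm_def)
lemma pm_empty: "pm g \<Longrightarrow> g {} = 0" by (auto simp: pm_def)
lemma pm_nonneg: "pm g \<Longrightarrow> 0 \<le> g A" using pm_mono[of g "{}" A] pm_empty[of g] by auto

lemma gr_nonneg: "pm g \<Longrightarrow> 0 \<le> gr g xs i"
  by (induction xs) (auto intro: pm_mono)

lemma gr_out: "i \<notin> set xs \<Longrightarrow> gr g xs i = 0"
  by (induction xs) auto

lemma gr_le:
  fixes g :: "'e::finite set \<Rightarrow> int"
  assumes "pm g" "distinct xs"
  shows "(\<Sum>i\<in>S. gr g xs i) \<le> g (S \<inter> set xs)"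
  using assms(2)
proof (induction xs arbitrary: S)
  case Nil
  then show ?case using pm_empty[OF assms(1)] by simp
next
  case (Cons e xs)
  have fin: "finite S" by simp
  show ?case
  proof (cases "e \<in> S")
    case False
    have "(\<Sum>i\<in>S. gr g (e#xs) i) = (\<Sum>i\<in>S. gr g xs i)"
      by (rule sum.cong) (use False in auto)
    also have "\<dots> \<le> g (S \<inter> set xs)" using Cons by auto
    also have "S \<inter> set xs = S \<inter> set (e#xs)" using False by auto
    finally show ?thesis .
  next
    case True
    have "(\<Sum>i\<in>S. gr g (e#xs) i) = gr g (e#xs) e + (\<Sum>i\<in>S-{e}. gr g (e#xs) i)"
      using True by (simp add: sum.remove)
    also have "(\<Sum>i\<in>S-{e}. gr g (e#xs) i) = (\<Sum>i\<in>S-{e}. gr g xs i)"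
      by (rule sum.cong) auto
    also have "\<dots> \<le> g ((S-{e}) \<inter> set xs)" using Cons by auto
    also have "(S-{e}) \<inter> set xs = S \<inter> set xs" using Cons.prems by auto
    finally have 1: "(\<Sum>i\<in>S. gr g (e#xs) i) \<le> g (insert e (set xs)) - g (set xs) + g (S \<inter> set xs)"
      by simp
    have "g ((insert e (S \<inter> set xs)) \<union> set xs) + g ((insert e (S \<inter> set xs)) \<inter> set xs)
          \<le> g (insert e (S \<inter> set xs)) + g (set xs)" by (rule pm_sub[OF assms(1)])
    moreover have "(insert e (S \<inter> set xs)) \<union> set xs = insert e (set xs)" by auto
    moreover have "(insert e (S \<inter> set xs)) \<inter> set xs = S \<inter> set xs" using Cons.prems by auto
    moreover have "insert e (S \<inter> set xs) = S \<inter> set (e#xs)" using True by auto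
    ultimately show ?thesis using 1 by simp
  qed
qed

lemma gr_tight:
  fixes g :: "'e::finite set \<Rightarrow> int"
  assumes "distinct (zs @ ys)"
  shows "(\<Sum>i\<in>set ys. gr g (zs @ ys) i) = g (set ys) - g {} "
  using assms
proof (induction zs)
  case Nil
  then show ?case
  proof (induction ys)
    case Nil then show ?case by simp
  next
    case (Cons e ys)
    have "(\<Sum>i\<in>set (e#ys). gr g (e#ys) i) = gr g (e#ys) e + (\<Sum>i\<in>set ys. gr g (e#ys) i)"
      using Cons.prems by simp
    also have "(\<Sum>i\<in>set ys. gr g (e#ys) i) = (\<Sum>i\<in>set ys. gr g ys i)"
      by (rule sum.cong) (use Cons.prems in auto)
    finally show ?case using Cons by simp
  qed
next
  case (Cons z zs)
  have "(\<Sum>i\<in>set ys. gr g (z # zs @ ys) i) = (\<Sum>i\<in>set ys. gr g (zs @ ys) i)"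
    by (rule sum.cong) (use Cons.prems in auto)
  then show ?case using Cons by simp
qed

definition gvec :: "('e::finite set \<Rightarrow> int) \<Rightarrow> 'e list \<Rightarrow> real^'e" where
  "gvec g xs = (\<chi> i. of_int (gr g xs i))"

lemma gvec_PP:
  fixes g :: "'e::finite set \<Rightarrow> int"
  assumes "pm g" "distinct xs"
  shows "gvec g xs \<in> PP g"
proof -
  have "(\<Sum>i\<in>S. gvec g xs $ i) \<le> of_int (g S)" for S
  proof -
    have "(\<Sum>i\<in>S. gvec g xs $ i) = of_int (\<Sum>i\<in>S. gr g xs i)" by (simp add: gvec_def)
    also have "\<dots> \<le> of_int (g (S \<inter> set xs))" using gr_le[OF assms, of S] by (metis of_int_le_iff of_int_sum)
    also have "\<dots> \<le> of_int (g S)" using pm_mono[OF assms(1), of "S \<inter> set xs" S] by simp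
    finally show ?thesis .
  qed
  then show ?thesis using gr_nonneg[OF assms(1)] by (auto simp: PP_def gvec_def)
qed

definition is_chain :: "'a set set \<Rightarrow> bool" where
  "is_chain C \<longleftrightarrow> (\<forall>A\<in>C. \<forall>B\<in>C. A \<subseteq> B \<or> B \<subseteq> A)"

lemma chain_list:
  fixes C :: "'e::finite set set"
  shows "is_chain C \<Longrightarrow> \<exists>xs. distinct xs \<and> set xs = \<Union>C \<and> (\<forall>S\<in>C. \<exists>zs ys. xs = zs @ ys \<and> set ys = S)"
proof (induction C rule: finite_remove_induct[OF finite])
  case 1
  then show ?case by (intro exI[of _ "[]"]) auto
next
  case (2 A)
  have "Max (card ` A) \<in> card ` A" using Max_in[of "card ` A"] \<open>A \<noteq> {}\<close> \<open>finite A\<close> by auto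
  then obtain M where M1: "M \<in> A" "card M = Max (card ` A)" by auto
  have M: "M \<in> A" "\<forall>S\<in>A. card S \<le> card M"
    using M1 \<open>finite A\<close> by (auto intro: Max_ge)
  have sub: "S \<subseteq> M" if "S \<in> A" for S
  proof -
    have "S \<subseteq> M \<or> M \<subseteq> S" using 2(5) M(1) that by (auto simp: is_chain_def)
    moreover have "M \<subseteq> S \<Longrightarrow> M = S" using card_seteq[of S M] M(2) that by simp
    ultimately show ?thesis by blast
  qed
  have chA: "is_chain (A - {M})" using 2(5) by (auto simp: is_chain_def)
  obtain ys where ys: "distinct ys" "set ys = \<Union>(A - {M})"
    "\<forall>S\<in>A-{M}. \<exists>zs ys'. ys = zs @ ys' \<and> set ys' = S"
    using 2(4)[OF M(1) chA] by (elim exE conjE)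
  obtain ws where ws: "distinct ws" "set ws = M - set ys"
    using finite_distinct_list[of "M - set ys"] by auto
  have U: "\<Union>A = M" using sub M(1) by auto
  have sys: "set ys \<subseteq> M" using ys(2) sub by auto
  show ?case
  proof (rule exI[of _ "ws @ ys"], intro conjI ballI)
    show "distinct (ws @ ys)" using ws ys by auto
    show "set (ws @ ys) = \<Union>A" using ws ys(2) U sys by auto
    fix S assume "S \<in> A"
    show "\<exists>zs ys'. ws @ ys = zs @ ys' \<and> set ys' = S"
    proof (cases "S = M")
      case True then show ?thesis using ws ys(2) U sys
        by (intro exI[of _ "[]"] exI[of _ "ws @ ys"]) auto
    next
      case False
      have SAM: "S \<in> A - {M}" using \<open>S \<in> A\<close> False by simp
      obtain zs ys' where "ys = zs @ ys'" "set ys' = S" using bspec[OF ys(3) SAM] by (elim exE conjE)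
      then show ?thesis by (intro exI[of _ "ws @ zs"] exI[of _ ys']) auto
    qed
  qed
qed

lemma chain_greedy:
  fixes g :: "'e::finite set \<Rightarrow> int" and C :: "'e set set"
  assumes "pm g" "is_chain C"
  shows "\<exists>xs. distinct xs \<and> set xs = \<Union>C \<and> (\<forall>S\<in>C. (\<Sum>i\<in>S. gvec g xs $ i) = of_int (g S))"
proof -
  obtain xs where xs: "distinct xs" "set xs = \<Union>C" "\<forall>S\<in>C. \<exists>zs ys. xs = zs @ ys \<and> set ys = S"
    using chain_list[OF assms(2)] by (elim exE conjE)
  have tight: "(\<Sum>i\<in>S. gvec g xs $ i) = of_int (g S)" if SC: "S \<in> C" for S
  proof -
    obtain zs ys where zy: "xs = zs @ ys" "set ys = S" using bspec[OF xs(3) SC] by (elim exE conjE)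
    have "(\<Sum>i\<in>S. gvec g xs $ i) = (\<Sum>i\<in>S. of_int (gr g xs i))"
      unfolding gvec_def by simp
    also have "\<dots> = of_int (\<Sum>i\<in>S. gr g xs i)" by (rule of_int_sum[symmetric])
    also have "(\<Sum>i\<in>S. gr g xs i) = g (set ys) - g {}"
      unfolding zy(1) zy(2)[symmetric] by (rule gr_tight) (use xs(1) zy(1) in simp)
    also have "g (set ys) - g {} = g S" using zy(2) pm_empty[OF assms(1)] by simp
    finally show ?thesis .
  qed
  show ?thesis using xs(1,2) tight by (intro exI[of _ xs]) simp
qed

lemma level_decomp:
  fixes w :: "real^'e::finite"
  shows "\<exists>C lam. is_chain C \<and> (\<forall>S\<in>C. S \<subseteq> {i. w$i > 0}) \<and> (\<forall>S. lam S \<ge> 0) \<and>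
     (\<forall>i. max (w$i) 0 = (\<Sum>S\<in>C. lam S * (if i \<in> S then 1 else 0)))"
proof (induction "card {i. w$i > 0}" arbitrary: w rule: less_induct)
  case less
  show ?case
  proof (cases "{i. w$i > 0} = {}")
    case True
    then show ?thesis
      by (intro exI[of _ "{}"] exI[of _ "\<lambda>_. 0"]) (auto simp: is_chain_def not_less max_def)
  next
    case False
    define P where "P = {i. w$i > 0}"
    define \<alpha> where "\<alpha> = Min ((\<lambda>i. w$i) ` P)"
    have Pne: "P \<noteq> {}" using False P_def by auto
    have apos: "\<alpha> > 0" using Min_in[of "(\<lambda>i. w$i) ` P"] Pne unfolding \<alpha>_def P_def by auto
    have "\<alpha> \<in> (\<lambda>i. w$i) ` P" using Min_in[of "(\<lambda>i. w$i) ` P"] Pne unfolding \<alpha>_def by auto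
    then obtain i0 where i0: "i0 \<in> P" "w$i0 = \<alpha>" by auto
    have ale: "\<alpha> \<le> w$i" if "i \<in> P" for i using that unfolding \<alpha>_def by auto
    define w' where "w' = (\<chi> i. if i \<in> P then w$i - \<alpha> else w$i)"
    have sub: "{i. w'$i > 0} \<subseteq> P - {i0}" using i0 by (auto simp: w'_def P_def split: if_splits)
    have lt: "card {i. w'$i > 0} < card {i. w$i > 0}"
      using sub i0(1) unfolding P_def
      by (meson card_mono card_Diff1_less finite le_less_trans)
    obtain C lam where C: "is_chain C" "\<forall>S\<in>C. S \<subseteq> {i. w'$i > 0}" "\<forall>S. lam S \<ge> 0"
      "\<forall>i. max (w'$i) 0 = (\<Sum>S\<in>C. lam S * (if i \<in> S then 1 else 0))"
      using less[OF lt] by (elim exE conjE)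
    have PnC: "P \<notin> C" using C(2) sub i0(1) by blast
    show ?thesis
    proof (intro exI[of _ "insert P C"] exI[of _ "lam(P := \<alpha>)"] conjI allI ballI)
      show "is_chain (insert P C)" using C(1,2) sub by (auto simp: is_chain_def)
      show "S \<subseteq> {i. 0 < w$i}" if "S \<in> insert P C" for S
        using that C(2) sub P_def by auto
      show "0 \<le> (lam(P := \<alpha>)) S" for S using C(3) apos by auto
      fix i
      have "(\<Sum>S\<in>insert P C. (lam(P := \<alpha>)) S * (if i \<in> S then 1 else 0))
          = \<alpha> * (if i \<in> P then 1 else 0) + (\<Sum>S\<in>C. lam S * (if i \<in> S then 1 else 0))"
        using PnC by (simp add: sum.insert_if) (rule sum.cong, auto)
      also have "\<dots> = max (w$i) 0"
        using C(4)[rule_format, of i] ale[of i] by (cases "w$i > 0") (auto simp: w'_def P_def max_def split: if_splits)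
      finally show "max (w$i) 0 = (\<Sum>S\<in>insert P C. (lam(P := \<alpha>)) S * (if i \<in> S then 1 else 0))" by simp
    qed
  qed
qed

lemma sum_ind:
  fixes f :: "'e::finite \<Rightarrow> real"
  shows "(\<Sum>i\<in>UNIV. a * (if i \<in> S then 1 else 0) * f i) = a * (\<Sum>i\<in>S. f i)"
proof -
  have "(\<Sum>i\<in>UNIV. a * (if i \<in> S then 1 else 0) * f i) = (\<Sum>i\<in>UNIV. if i \<in> S then a * f i else 0)"
    by (rule sum.cong) auto
  also have "\<dots> = (\<Sum>i\<in>S. a * f i)" by (simp add: sum.If_cases)
  finally show ?thesis by (simp add: sum_distrib_left)
qed

lemma inner_eq: "(w::real^'e::finite) \<bullet> y = (\<Sum>i\<in>UNIV. w$i * y$i)"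
  by (simp add: inner_vec_def)

lemma greedy_opt:
  fixes g :: "'e::finite set \<Rightarrow> int" and w :: "real^'e"
  assumes "pm g"
  shows "\<exists>xs. distinct xs \<and> (\<forall>y\<in>PP g. w \<bullet> y \<le> w \<bullet> gvec g xs)"
proof -
  obtain C lam where C: "is_chain C" "\<forall>S\<in>C. S \<subseteq> {i. w$i > 0}" "\<forall>S. lam S \<ge> 0"
      "\<forall>i. max (w$i) 0 = (\<Sum>S\<in>C. lam S * (if i \<in> S then 1 else 0))"
    using level_decomp[of w] by (elim exE conjE)
  obtain xs where xs: "distinct xs" "set xs = \<Union>C" "\<forall>S\<in>C. (\<Sum>i\<in>S. gvec g xs $ i) = of_int (g S)"
    using chain_greedy[OF assms C(1)] by (elim exE conjE)
  define x where "x = gvec g xs"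
  have key: "(\<Sum>i\<in>UNIV. max (w$i) 0 * v$i) = (\<Sum>S\<in>C. lam S * (\<Sum>i\<in>S. v$i))" for v :: "real^'e"
  proof -
    have "(\<Sum>i\<in>UNIV. max (w$i) 0 * v$i) = (\<Sum>i\<in>UNIV. \<Sum>S\<in>C. lam S * (if i \<in> S then 1 else 0) * v$i)"
      using C(4) by (simp add: sum_distrib_right)
    also have "\<dots> = (\<Sum>S\<in>C. \<Sum>i\<in>UNIV. lam S * (if i \<in> S then 1 else 0) * v$i)"
      by (rule sum.swap)
    also have "\<dots> = (\<Sum>S\<in>C. lam S * (\<Sum>i\<in>S. v$i))" by (simp add: sum_ind)
    finally show ?thesis .
  qed
  have wx: "w \<bullet> x = (\<Sum>S\<in>C. lam S * of_int (g S))"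
  proof -
    have "w \<bullet> x = (\<Sum>i\<in>UNIV. max (w$i) 0 * x$i)"
      unfolding inner_eq
    proof (rule sum.cong)
      fix i
      show "w $ i * x $ i = max (w $ i) 0 * x $ i"
      proof (cases "w$i > 0")
        case False
        then have "i \<notin> set xs" using xs(2) C(2) by auto
        then show ?thesis by (simp add: x_def gvec_def gr_out)
      qed auto
    qed simp
    also have "\<dots> = (\<Sum>S\<in>C. lam S * (\<Sum>i\<in>S. x$i))" by (rule key)
    also have "\<dots> = (\<Sum>S\<in>C. lam S * of_int (g S))"
      by (rule sum.cong) (use xs(3) in \<open>auto simp: x_def\<close>)
    finally show ?thesis .
  qed
  have "w \<bullet> y \<le> w \<bullet> x" if y: "y \<in> PP g" for y
  proof -
    have "w \<bullet> y \<le> (\<Sum>i\<in>UNIV. max (w$i) 0 * y$i)"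
      unfolding inner_eq
      by (rule sum_mono) (use y in \<open>auto simp: PP_def intro: mult_right_mono\<close>)
    also have "\<dots> = (\<Sum>S\<in>C. lam S * (\<Sum>i\<in>S. y$i))" by (rule key)
    also have "\<dots> \<le> (\<Sum>S\<in>C. lam S * of_int (g S))"
      by (rule sum_mono) (use y C(3) in \<open>auto simp: PP_def intro: mult_left_mono\<close>)
    finally show ?thesis using wx by simp
  qed
  then show ?thesis using xs(1) unfolding x_def by blast
qed

lemma convex_PP:
  fixes g :: "'e::finite set \<Rightarrow> int"
  shows "convex (PP g)"
proof (unfold convex_def, intro ballI allI impI)
  fix x y :: "real^'e" and u v :: real
  assume x: "x \<in> PP g" and y: "y \<in> PP g" and uv: "0 \<le> u" "0 \<le> v" "u + v = 1"
  have "(\<Sum>i\<in>S. (u *\<^sub>R x + v *\<^sub>R y) $ i) \<le> of_int (g S)" for S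
  proof -
    have "(\<Sum>i\<in>S. (u *\<^sub>R x + v *\<^sub>R y) $ i) = u * (\<Sum>i\<in>S. x$i) + v * (\<Sum>i\<in>S. y$i)"
      by (simp add: sum.distrib sum_distrib_left)
    also have "\<dots> \<le> u * of_int (g S) + v * of_int (g S)"
      using x y uv by (intro add_mono mult_left_mono) (auto simp: PP_def)
    also have "\<dots> = of_int (g S)" using uv by (simp add: distrib_right[symmetric])
    finally show ?thesis .
  qed
  then show "u *\<^sub>R x + v *\<^sub>R y \<in> PP g" using x y uv by (auto simp: PP_def)
qed

lemma finite_distinct_lists: "finite {xs :: 'e::finite list. distinct xs}"
proof -
  have "{xs :: 'e list. distinct xs} \<subseteq> {xs. set xs \<subseteq> UNIV \<and> length xs \<le> CARD('e)}"
  proof (intro subsetI CollectI conjI)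
    fix xs :: "'e list" assume "xs \<in> {xs. distinct xs}"
    then have "card (set xs) = length xs" by (simp add: distinct_card)
    moreover have "card (set xs) \<le> CARD('e)" by (rule card_mono) auto
    ultimately show "length xs \<le> CARD('e)" by simp
  qed simp
  then show ?thesis by (rule finite_subset) (use finite_lists_length_le[of "UNIV::'e set" "CARD('e)"] in simp)
qed

lemma PP_lattice:
  fixes g :: "'e::finite set \<Rightarrow> int"
  assumes "pm g"
  shows "lattice_polytope (PP g)"
proof -
  define V where "V = gvec g ` {xs. distinct xs}"
  have finV: "finite V" unfolding V_def by (rule finite_imageI[OF finite_distinct_lists])
  have VP: "V \<subseteq> PP g" unfolding V_def using gvec_PP[OF assms] by auto
  have "PP g \<subseteq> convex hull V"
  proof
    fix y assume y: "y \<in> PP g"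
    show "y \<in> convex hull V"
    proof (rule ccontr)
      assume nin: "y \<notin> convex hull V"
      have "closed (convex hull V)"
        using finV by (simp add: compact_imp_closed compact_convex_hull finite_imp_compact)
      then obtain a b where ab: "a \<bullet> y < b" "\<forall>x\<in>convex hull V. b < a \<bullet> x"
        using separating_hyperplane_closed_point[OF convex_convex_hull _ nin] by blast
      obtain xs where xs: "distinct xs" "\<forall>y\<in>PP g. (-a) \<bullet> y \<le> (-a) \<bullet> gvec g xs"
        using greedy_opt[OF assms, of "-a"] by (elim exE conjE)
      have "gvec g xs \<in> convex hull V" using xs(1) hull_subset unfolding V_def by fastforce
      then have "b < a \<bullet> gvec g xs" using ab(2) by blast
      moreover have "a \<bullet> gvec g xs \<le> a \<bullet> y" using xs(2) y by simp
      ultimately show False using ab(1) by simp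
    qed
  qed
  moreover have "convex hull V \<subseteq> PP g" using VP convex_PP by (rule hull_minimal)
  ultimately have eq: "PP g = convex hull V" by blast
  show ?thesis unfolding lattice_polytope_def
  proof (intro exI[of _ V] conjI ballI)
    show "V \<noteq> {}" unfolding V_def by (metis (mono_tags) distinct.simps(1) empty_iff image_eqI mem_Collect_eq)
    fix v assume "v \<in> V"
    then show "integral_vec v" unfolding V_def integral_vec_def gvec_def by auto
  qed (use finV eq in auto)
qed

lemma indvec_inner: "indvec S \<bullet> (v::real^'e::finite) = (\<Sum>i\<in>S. v$i)"
proof -
  have "indvec S \<bullet> v = (\<Sum>i\<in>UNIV. if i \<in> S then v$i else 0)"
    unfolding inner_eq indvec_def by (rule sum.cong) auto
  also have "\<dots> = (\<Sum>i\<in>S. v$i)" by (simp add: sum.If_cases)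
  finally show ?thesis .
qed

lemma PP_fan:
  fixes g :: "'e::finite set \<Rightarrow> int"
  assumes "pm g"
  shows "normal_fan_coarsens_stell (PP g)"
  unfolding normal_fan_coarsens_stell_def
proof (intro allI impI)
  fix F :: "'e set set" and I
  assume d: "stell_cone_data F I"
  define C where "C = (\<lambda>F. UNIV - F) ` F"
  have ch: "is_chain C" using d unfolding C_def stell_cone_data_def is_chain_def by blast
  obtain xs where xs: "distinct xs" "set xs = \<Union>C" "\<forall>S\<in>C. (\<Sum>i\<in>S. gvec g xs $ i) = of_int (g S)"
    using chain_greedy[OF assms ch] by (elim exE conjE)
  define x where "x = gvec g xs"
  have xP: "x \<in> PP g" unfolding x_def by (rule gvec_PP[OF assms xs(1)])
  define K where "K = {w. \<forall>y\<in>PP g. w \<bullet> x \<le> w \<bullet> y}"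
  have coneK: "cone K" unfolding cone_def K_def
    by (auto intro: mult_left_mono)
  have genK: "stell_cone_gens F I \<subseteq> K"
  proof
    fix w assume "w \<in> stell_cone_gens F I"
    then consider (a) G where "G \<in> F" "w = - indvec (UNIV - G)" | (b) j where "j \<in> I" "w = indvec {j}"
      unfolding stell_cone_gens_def by blast
    then show "w \<in> K"
    proof cases
      case a
      have "UNIV - G \<in> C" using a(1) C_def by blast
      then have "(\<Sum>i\<in>UNIV - G. x $ i) = of_int (g (UNIV - G))" using xs(3) x_def by blast
      then show ?thesis using a(2) unfolding K_def
        by (auto simp: indvec_inner PP_def)
    next
      case b
      have "j \<notin> set xs" using b(1) d xs(2) unfolding C_def stell_cone_data_def by auto
      then have "x $ j = 0" by (simp add: x_def gvec_def gr_out)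
      then show ?thesis using b(2) unfolding K_def by (auto simp: indvec_inner PP_def)
    qed
  qed
  have "stell_cone F I \<subseteq> K" unfolding stell_cone_def using genK coneK by (rule hull_minimal)
  then show "\<exists>x\<in>PP g. \<forall>w\<in>stell_cone F I. \<forall>y\<in>PP g. w \<bullet> x \<le> w \<bullet> y"
    using xP unfolding K_def by blast
qed

lemma PP_admissible: "pm g \<Longrightarrow> stell_admissible (PP g)"
  by (simp add: stell_admissible_def PP_lattice PP_fan)

lemma polymatroid_pm: "polymatroid UNIV rk \<Longrightarrow> pm (\<lambda>S. int (rk S))"
  unfolding polymatroid_def pm_def
  by (metis (no_types, lifting) of_nat_add of_nat_le_iff top_greatest of_nat_0)

lemma indep_PP: "indep_polytope rk = PP (\<lambda>S. int (rk S))"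
  by (simp add: indep_polytope_def PP_def)

lemma indep_admissible: "polymatroid UNIV rk \<Longrightarrow> stell_admissible (indep_polytope rk)"
  by (simp add: indep_PP PP_admissible polymatroid_pm)

definition upc :: "('e::finite set \<Rightarrow> int) \<Rightarrow> 'e set \<Rightarrow> int" where
  "upc h U = (if U = {} then 0 else Min (h ` {S. U \<subseteq> S}))"

lemma upc_le: "U \<noteq> {} \<Longrightarrow> U \<subseteq> S \<Longrightarrow> upc h U \<le> h S"
  unfolding upc_def by (auto intro: Min_le)

lemma upc_ex: "U \<noteq> {} \<Longrightarrow> \<exists>S. U \<subseteq> S \<and> upc h U = h S"
proof -
  assume U: "U \<noteq> {}"
  have "Min (h ` {S. U \<subseteq> S}) \<in> h ` {S. U \<subseteq> S}" by (rule Min_in) auto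
  then show ?thesis using U unfolding upc_def by auto
qed

lemma upc_pm:
  fixes h :: "'e::finite set \<Rightarrow> int"
  assumes sub: "\<And>A B. h (A \<union> B) + h (A \<inter> B) \<le> h A + h B" and nn: "\<And>S. 0 \<le> h S"
  shows "pm (upc h)"
  unfolding pm_def
proof (intro conjI allI impI)
  show "upc h {} = 0" by (simp add: upc_def)
  have nn': "0 \<le> upc h U" for U
    using upc_ex[of U h] nn by (cases "U = {}") (auto simp: upc_def)
  fix A B :: "'e set"
  show "A \<subseteq> B \<Longrightarrow> upc h A \<le> upc h B"
  proof -
    assume AB: "A \<subseteq> B"
    show ?thesis
    proof (cases "A = {}")
      case True then show ?thesis using nn' by (simp add: upc_def)
    next
      case False
      then have Bne: "B \<noteq> {}" using AB by auto
      obtain S where S: "B \<subseteq> S" "upc h B = h S" using upc_ex[OF Bne] by blast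
      then show ?thesis using upc_le[OF False, of S h] AB by auto
    qed
  qed
  show "upc h (A \<union> B) + upc h (A \<inter> B) \<le> upc h A + upc h B"
  proof (cases "A = {} \<or> B = {}")
    case True then show ?thesis by (auto simp: upc_def)
  next
    case False
    then have An: "A \<noteq> {}" and Bn: "B \<noteq> {}" by auto
    obtain S where S: "A \<subseteq> S" "upc h A = h S" using upc_ex[OF An] by blast
    obtain S' where S': "B \<subseteq> S'" "upc h B = h S'" using upc_ex[OF Bn] by blast
    have 1: "upc h (A \<union> B) \<le> h (S \<union> S')" using An S S' by (intro upc_le) auto
    have 2: "upc h (A \<inter> B) \<le> h (S \<inter> S')"
    proof (cases "A \<inter> B = {}")
      case True then show ?thesis using nn by (simp add: upc_def)
    next
      case False then show ?thesis using S S' by (intro upc_le) auto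
    qed
    show ?thesis using 1 2 sub[of S S'] S S' by linarith
  qed
qed

lemma upc_PP:
  fixes h :: "'e::finite set \<Rightarrow> int"
  assumes nn: "\<And>S. 0 \<le> h S"
  shows "PP (upc h) = {y. (\<forall>i. 0 \<le> y$i) \<and> (\<forall>S. (\<Sum>i\<in>S. y$i) \<le> of_int (h S))}"
proof (intro equalityI subsetI)
  fix y :: "real^'e" assume y: "y \<in> PP (upc h)"
  have "(\<Sum>i\<in>S. y$i) \<le> of_int (h S)" for S
  proof (cases "S = {}")
    case True then show ?thesis using nn[of S] by simp
  next
    case False
    have "(\<Sum>i\<in>S. y$i) \<le> of_int (upc h S)" using y by (auto simp: PP_def)
    also have "\<dots> \<le> of_int (h S)" using upc_le[OF False, of S h] by simp
    finally show ?thesis .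
  qed
  then show "y \<in> {y. (\<forall>i. 0 \<le> y$i) \<and> (\<forall>S. (\<Sum>i\<in>S. y$i) \<le> of_int (h S))}"
    using y by (auto simp: PP_def)
next
  fix y :: "real^'e" assume y: "y \<in> {y. (\<forall>i. 0 \<le> y$i) \<and> (\<forall>S. (\<Sum>i\<in>S. y$i) \<le> of_int (h S))}"
  have "(\<Sum>i\<in>U. y$i) \<le> of_int (upc h U)" for U
  proof (cases "U = {}")
    case True then show ?thesis by (simp add: upc_def)
  next
    case False
    obtain S where S: "U \<subseteq> S" "upc h U = h S" using upc_ex[OF False] by blast
    have "(\<Sum>i\<in>U. y$i) \<le> (\<Sum>i\<in>S. y$i)" using y S(1) by (intro sum_mono2) auto
    also have "\<dots> \<le> of_int (h S)" using y by auto
    finally show ?thesis using S(2) by simp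
  qed
  then show "y \<in> PP (upc h)" using y by (auto simp: PP_def)
qed

definition cvl :: "('e::finite set \<Rightarrow> int) \<Rightarrow> 'e set \<Rightarrow> 'e set \<Rightarrow> int" where
  "cvl g T U = Min ((\<lambda>A. g A + int (card ((U - A) \<inter> T))) ` Pow U)"

lemma cvl_le: "A \<subseteq> U \<Longrightarrow> cvl g T U \<le> g A + int (card ((U - A) \<inter> T))"
  unfolding cvl_def by (auto intro: Min_le)

lemma cvl_ex: "\<exists>A. A \<subseteq> U \<and> cvl g T U = g A + int (card ((U - A) \<inter> T))"
proof -
  have "cvl g T U \<in> (\<lambda>A. g A + int (card ((U - A) \<inter> T))) ` Pow U"
    unfolding cvl_def by (rule Min_in) auto
  then show ?thesis by auto
qed

lemma card_ind: "card (X::'e::finite set) = (\<Sum>i\<in>UNIV. if i \<in> X then 1 else 0)"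
  by (simp add: sum.If_cases)

lemma card_ineq:
  fixes U V A B T :: "'e::finite set"
  assumes "A \<subseteq> U" "B \<subseteq> V"
  shows "card (((U \<union> V) - (A \<union> B)) \<inter> T) + card (((U \<inter> V) - (A \<inter> B)) \<inter> T)
      \<le> card ((U - A) \<inter> T) + card ((V - B) \<inter> T)"
proof -
  have "card (((U \<union> V) - (A \<union> B)) \<inter> T) + card (((U \<inter> V) - (A \<inter> B)) \<inter> T)
      = (\<Sum>i\<in>UNIV. (if i \<in> ((U \<union> V) - (A \<union> B)) \<inter> T then 1 else 0) + (if i \<in> ((U \<inter> V) - (A \<inter> B)) \<inter> T then 1 else 0))"
    by (simp add: card_ind sum.distrib)
  also have "\<dots> \<le> (\<Sum>i\<in>UNIV. (if i \<in> (U - A) \<inter> T then 1 else 0) + (if i \<in> (V - B) \<inter> T then 1 else 0))"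
    by (rule sum_mono) (use assms in auto)
  also have "\<dots> = card ((U - A) \<inter> T) + card ((V - B) \<inter> T)"
    by (simp add: card_ind sum.distrib)
  finally show ?thesis .
qed

lemma cvl_pm:
  fixes g :: "'e::finite set \<Rightarrow> int"
  assumes g: "pm g"
  shows "pm (cvl g T)"
  unfolding pm_def
proof (intro conjI allI impI)
  show "cvl g T {} = 0" using pm_empty[OF g] by (simp add: cvl_def)
  fix U V :: "'e set"
  show "U \<subseteq> V \<Longrightarrow> cvl g T U \<le> cvl g T V"
  proof -
    assume UV: "U \<subseteq> V"
    obtain A where A: "A \<subseteq> V" "cvl g T V = g A + int (card ((V - A) \<inter> T))" using cvl_ex by blast
    have "cvl g T U \<le> g (A \<inter> U) + int (card ((U - A \<inter> U) \<inter> T))" by (rule cvl_le) auto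
    also have "\<dots> \<le> g A + int (card ((V - A) \<inter> T))"
    proof (rule add_mono)
      show "g (A \<inter> U) \<le> g A" using pm_mono[OF g] by auto
      have "card ((U - A \<inter> U) \<inter> T) \<le> card ((V - A) \<inter> T)" using UV by (intro card_mono) auto
      then show "int (card ((U - A \<inter> U) \<inter> T)) \<le> int (card ((V - A) \<inter> T))" by simp
    qed
    finally show ?thesis using A(2) by simp
  qed
  obtain A where A: "A \<subseteq> U" "cvl g T U = g A + int (card ((U - A) \<inter> T))" using cvl_ex by blast
  obtain B where B: "B \<subseteq> V" "cvl g T V = g B + int (card ((V - B) \<inter> T))" using cvl_ex by blast
  have 1: "cvl g T (U \<union> V) \<le> g (A \<union> B) + int (card (((U \<union> V) - (A \<union> B)) \<inter> T))"
    using A B by (intro cvl_le) auto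
  have 2: "cvl g T (U \<inter> V) \<le> g (A \<inter> B) + int (card (((U \<inter> V) - (A \<inter> B)) \<inter> T))"
    using A B by (intro cvl_le) auto
  have 3: "g (A \<union> B) + g (A \<inter> B) \<le> g A + g B" by (rule pm_sub[OF g])
  have 4: "int (card (((U \<union> V) - (A \<union> B)) \<inter> T)) + int (card (((U \<inter> V) - (A \<inter> B)) \<inter> T))
      \<le> int (card ((U - A) \<inter> T)) + int (card ((V - B) \<inter> T))"
    using card_ineq[OF A(1) B(1), of T] by linarith
  show "cvl g T (U \<union> V) + cvl g T (U \<inter> V) \<le> cvl g T U + cvl g T V"
    using 1 2 3 4 A(2) B(2) by linarith
qed

lemma cvl_nonneg: "pm g \<Longrightarrow> 0 \<le> cvl g T U"
proof -
  assume g: "pm g"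
  obtain A where A: "A \<subseteq> U" "cvl g T U = g A + int (card ((U - A) \<inter> T))"
    using cvl_ex[where g=g and T=T and U=U] by blast
  then show ?thesis using pm_nonneg[OF g, of A] by simp
qed

lemma cvl_single: "pm g \<Longrightarrow> cvl g T {i} \<le> 1"
proof -
  assume g: "pm g"
  have "cvl g T {i} \<le> g {} + int (card (({i} - {}) \<inter> T))" by (rule cvl_le) auto
  also have "\<dots> \<le> 1" using pm_empty[OF g] by (cases "i \<in> T") auto
  finally show ?thesis .
qed

lemma cvl_top: "cvl g T U \<le> g U"
  using cvl_le[of U U g T] by simp

lemma sum_ind_T: "(\<Sum>i\<in>X. (if i \<in> T then 1 else 0 :: real)) = real (card (X \<inter> (T::'e::finite set)))"
  by (simp add: sum.If_cases Int_commute)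

lemma cvl_PP:
  fixes g :: "'e::finite set \<Rightarrow> int"
  assumes g: "pm g"
  shows "PP (cvl g T) = PP g \<inter> {y. \<forall>i. y$i \<le> (if i \<in> T then 1 else 0)}"
proof (intro equalityI subsetI)
  fix y :: "real^'e" assume y: "y \<in> PP (cvl g T)"
  have a: "(\<Sum>i\<in>S. y$i) \<le> of_int (g S)" for S
  proof -
    have "(\<Sum>i\<in>S. y$i) \<le> of_int (cvl g T S)" using y unfolding PP_def by blast
    also have "\<dots> \<le> of_int (g S)" using cvl_top[where g=g and T=T and U=S] by simp
    finally show ?thesis .
  qed
  have b: "y$i \<le> (if i \<in> T then 1 else 0)" for i
  proof -
    have "y$i = (\<Sum>j\<in>{i}. y$j)" by simp
    also have "\<dots> \<le> of_int (cvl g T {i})" using y unfolding PP_def by blast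
    also have "\<dots> \<le> of_int (g {} + int (card (({i} - {}) \<inter> T)))"
    proof -
      have "cvl g T {i} \<le> g {} + int (card (({i} - {}) \<inter> T))" by (rule cvl_le) simp
      then show ?thesis by (simp only: of_int_le_iff)
    qed
    also have "\<dots> = (if i \<in> T then 1 else 0)" using pm_empty[OF g] by auto
    finally show ?thesis .
  qed
  show "y \<in> PP g \<inter> {y. \<forall>i. y$i \<le> (if i \<in> T then 1 else 0)}"
    using y a b by (auto simp: PP_def)
next
  fix y :: "real^'e" assume y: "y \<in> PP g \<inter> {y. \<forall>i. y$i \<le> (if i \<in> T then 1 else 0)}"
  have "(\<Sum>i\<in>U. y$i) \<le> of_int (cvl g T U)" for U
  proof -
    obtain A where A: "A \<subseteq> U" "cvl g T U = g A + int (card ((U - A) \<inter> T))" using cvl_ex by blast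
    have "(\<Sum>i\<in>U. y$i) = (\<Sum>i\<in>A. y$i) + (\<Sum>i\<in>U - A. y$i)"
      using A(1) by (metis add.commute finite sum.subset_diff)
    also have "(\<Sum>i\<in>A. y$i) \<le> of_int (g A)" using y by (auto simp: PP_def)
    also have "(\<Sum>i\<in>U - A. y$i) \<le> (\<Sum>i\<in>U - A. (if i \<in> T then 1 else 0))"
      using y by (intro sum_mono) auto
    also have "\<dots> = real (card ((U - A) \<inter> T))" by (rule sum_ind_T)
    finally show ?thesis using A(2) by simp
  qed
  then show "y \<in> PP (cvl g T)" using y by (auto simp: PP_def)
qed

lemma pm_nat:
  fixes q :: "'e::finite set \<Rightarrow> int"
  assumes q: "pm q"
  shows "polymatroid UNIV (\<lambda>U. nat (q U))" "indep_polytope (\<lambda>U. nat (q U)) = PP q"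
proof -
  have nn: "\<And>U. 0 \<le> q U" using pm_nonneg[OF q] .
  show "polymatroid UNIV (\<lambda>U. nat (q U))"
    unfolding polymatroid_def
  proof (intro conjI allI impI)
    show "nat (q {}) = 0" using pm_empty[OF q] by simp
    fix A B :: "'e set"
    show "A \<subseteq> B \<and> B \<subseteq> UNIV \<Longrightarrow> nat (q A) \<le> nat (q B)" using pm_mono[OF q, of A B] by auto
    show "A \<subseteq> UNIV \<and> B \<subseteq> UNIV \<Longrightarrow> nat (q (A \<union> B)) + nat (q (A \<inter> B)) \<le> nat (q A) + nat (q B)"
      using pm_sub[OF q, of A B] nn[of A] nn[of B] nn[of "A \<union> B"] nn[of "A \<inter> B"] by linarith
  qed
  show "indep_polytope (\<lambda>U. nat (q U)) = PP q"
    unfolding indep_polytope_def PP_def using nn by simp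
qed

definition Ch :: "nat \<Rightarrow> (int \<times> bool) set" where
  "Ch B = ({0..int B} \<times> {True}) \<union> ({1..int B} \<times> {False})"

definition cellm :: "int \<times> bool \<Rightarrow> real \<Rightarrow> bool" where
  "cellm ch t = (if snd ch then of_int (fst ch) \<le> t \<and> t \<le> of_int (fst ch) + 1 else t = of_int (fst ch))"

definition sg :: "int \<times> bool \<Rightarrow> int" where
  "sg ch = (if snd ch then 1 else -1)"

lemma sum_pairs:
  fixes f :: "int \<times> bool \<Rightarrow> int"
  shows "(\<Sum>ch\<in>A \<times> {b}. f ch) = (\<Sum>k\<in>A. f (k, b))"
proof -
  have "A \<times> {b} = (\<lambda>k. (k, b)) ` A" by auto
  moreover have "inj_on (\<lambda>k. (k, b)) A" by (auto simp: inj_on_def)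
  ultimately show ?thesis by (simp add: sum.reindex)
qed

lemma sum_count: "(\<Sum>k\<in>A. if P k then 1 else 0 :: int) = int (card {k\<in>A. P k})" if "finite A"
  using that by (simp add: sum.If_cases Int_def conj_commute)

lemma coord_sum:
  fixes t :: real
  assumes t: "0 \<le> t" "t \<le> real B"
  shows "(\<Sum>ch\<in>Ch B. sg ch * (if cellm ch t then 1 else 0)) = 1"
proof -
  have disj: "({0..int B} \<times> {True}) \<inter> ({1..int B} \<times> {False}) = {}" by auto
  have "(\<Sum>ch\<in>Ch B. sg ch * (if cellm ch t then 1 else 0))
     = (\<Sum>k\<in>{0..int B}. if of_int k \<le> t \<and> t \<le> of_int k + 1 then 1 else 0)
       - (\<Sum>k\<in>{1..int B}. if t = of_int k then 1 else 0)"
    unfolding Ch_def using disj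
    apply (simp add: sum.union_disjoint sum_pairs sg_def cellm_def)
    by (simp add: sum_negf)
  also have "\<dots> = int (card {k\<in>{0..int B}. of_int k \<le> t \<and> t \<le> of_int k + 1})
                 - int (card {k\<in>{1..int B}. t = of_int k})"
    by (simp add: sum_count)
  also have "\<dots> = 1"
  proof (cases "t \<in> \<int>")
    case True
    then obtain m where m: "t = of_int m" by (auto elim: Ints_cases)
    have m0: "0 \<le> m" "m \<le> int B" using t m by auto
    show ?thesis
    proof (cases "m = 0")
      case True
      have e1: "{k\<in>{0..int B}. of_int k \<le> t \<and> t \<le> of_int k + 1} = {0}" using m True m0 by auto
      have e2: "{k\<in>{1..int B}. t = of_int k} = {}" using m True by auto
      show ?thesis unfolding e1 e2 by simp
    next
      case False
      have e1: "{k\<in>{0..int B}. of_int k \<le> t \<and> t \<le> of_int k + 1} = {m - 1, m}"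
      proof (intro equalityI subsetI)
        fix k assume "k \<in> {k\<in>{0..int B}. of_int k \<le> t \<and> t \<le> of_int k + 1}"
        then have "k \<le> m" "m \<le> k + 1" using m by (auto simp flip: of_int_le_iff)
        then show "k \<in> {m - 1, m}" by auto
      qed (use m m0 False in auto)
      have e2: "{k\<in>{1..int B}. t = of_int k} = {m}" using m m0 False by auto
      show ?thesis unfolding e1 e2 by simp
    qed
  next
    case False
    have fl: "0 \<le> \<lfloor>t\<rfloor>" "\<lfloor>t\<rfloor> \<le> int B" using t by (auto simp: le_floor_iff floor_le_iff)
    have e1: "{k\<in>{0..int B}. of_int k \<le> t \<and> t \<le> of_int k + 1} = {\<lfloor>t\<rfloor>}"
    proof (intro equalityI subsetI)
      fix k assume k: "k \<in> {k\<in>{0..int B}. of_int k \<le> t \<and> t \<le> of_int k + 1}"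
      have "t \<noteq> of_int k + 1" using False by (metis Ints_1 Ints_add Ints_of_int)
      then have "t < of_int (k + 1)" using k by auto
      then have "\<lfloor>t\<rfloor> < k + 1" by (metis floor_less_iff)
      moreover have "k \<le> \<lfloor>t\<rfloor>" using k by (simp add: le_floor_iff)
      ultimately show "k \<in> {\<lfloor>t\<rfloor>}" by simp
    next
      fix k assume "k \<in> {\<lfloor>t\<rfloor>}"
      then show "k \<in> {k\<in>{0..int B}. of_int k \<le> t \<and> t \<le> of_int k + 1}"
        using fl by (auto simp: of_int_floor_le less_imp_le[OF real_of_int_floor_add_one_gt])
    qed
    have e2: "{k\<in>{1..int B}. t = of_int k} = {}" using False by auto
    show ?thesis unfolding e1 e2 by simp
  qed
  finally show ?thesis .
qed

definition zv :: "('e::finite \<Rightarrow> int \<times> bool) \<Rightarrow> real^'e" where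
  "zv c = (\<chi> i. of_int (fst (c i)))"

definition Yc :: "('e::finite set \<Rightarrow> int) \<Rightarrow> ('e \<Rightarrow> int \<times> bool) \<Rightarrow> (real^'e) set" where
  "Yc f c = {y. (\<forall>i. 0 \<le> y$i \<and> y$i \<le> (if snd (c i) then 1 else 0)) \<and>
     (\<forall>S. (\<Sum>i\<in>S. y$i) + of_int (\<Sum>i\<in>S. fst (c i)) \<le> of_int (f S))}"

definition sgnc :: "('e::finite \<Rightarrow> int \<times> bool) \<Rightarrow> int" where
  "sgnc c = (\<Prod>i\<in>(UNIV::'e set). sg (c i))"

lemma Cs_fst: "c \<in> PiE UNIV (\<lambda>_. Ch B) \<Longrightarrow> 0 \<le> fst (c i)"
proof -
  assume "c \<in> PiE UNIV (\<lambda>_. Ch B)"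
  then have "c i \<in> Ch B" by (auto simp: PiE_iff)
  then show ?thesis by (auto simp: Ch_def)
qed

lemma sum_minus_zv: "(\<Sum>i\<in>S. (p - zv c)$i) = (\<Sum>i\<in>S. p$i) - of_int (\<Sum>i\<in>S. fst (c i))"
  by (simp add: zv_def sum_subtractf)

lemma Yc_iff:
  fixes f :: "'e::finite set \<Rightarrow> int"
  assumes c: "c \<in> PiE UNIV (\<lambda>_. Ch B)"
  shows "(p - zv c \<in> Yc f c) \<longleftrightarrow> (p \<in> PP f \<and> (\<forall>i. cellm (c i) (p$i)))"
proof
  assume y: "p - zv c \<in> Yc f c"
  have 1: "0 \<le> p$i" for i
    using y Cs_fst[OF c, of i] unfolding Yc_def zv_def by (auto simp: algebra_simps) (smt (verit) of_int_0_le_iff)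
  have 2: "(\<Sum>i\<in>S. p$i) \<le> of_int (f S)" for S
  proof -
    have "(\<Sum>i\<in>S. (p - zv c)$i) + of_int (\<Sum>i\<in>S. fst (c i)) \<le> of_int (f S)"
      using y unfolding Yc_def by blast
    then show ?thesis unfolding sum_minus_zv by simp
  qed
  have 3: "cellm (c i) (p$i)" for i
    using y unfolding Yc_def cellm_def zv_def by (auto split: if_splits) (smt (verit))+
  show "p \<in> PP f \<and> (\<forall>i. cellm (c i) (p$i))" using 1 2 3 by (auto simp: PP_def)
next
  assume p: "p \<in> PP f \<and> (\<forall>i. cellm (c i) (p$i))"
  have 1: "0 \<le> (p - zv c)$i \<and> (p - zv c)$i \<le> (if snd (c i) then 1 else 0)" for i
  proof -
    have "cellm (c i) (p$i)" using p by blast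
    then show ?thesis unfolding cellm_def zv_def by (auto split: if_splits)
  qed
  have 2: "(\<Sum>i\<in>S. (p - zv c)$i) + of_int (\<Sum>i\<in>S. fst (c i)) \<le> of_int (f S)" for S
    unfolding sum_minus_zv using p by (auto simp: PP_def)
  show "p - zv c \<in> Yc f c" using 1 2 unfolding Yc_def by blast
qed

lemma prod_ind: "(\<Prod>i\<in>(UNIV::'e::finite set). (if P i then 1 else 0 :: int)) = (if \<forall>i. P i then 1 else 0)"
proof (cases "\<forall>i. P i")
  case True then show ?thesis by simp
next
  case False
  then obtain i where "\<not> P i" by blast
  then have "(\<Prod>i\<in>(UNIV::'e set). (if P i then 1 else 0 :: int)) = 0"
    by (subst prod_zero_iff) auto
  then show ?thesis using False by simp
qed

lemma identity:
  fixes f :: "'e::finite set \<Rightarrow> int"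
  assumes f: "pm f" "f UNIV \<le> int B"
  shows "indic (PP f) p = (\<Sum>c\<in>PiE UNIV (\<lambda>_. Ch B). sgnc c * indic (Yc f c) (p - zv c))"
proof (cases "p \<in> PP f")
  case False
  have "(\<Sum>c\<in>PiE UNIV (\<lambda>_. Ch B). sgnc c * indic (Yc f c) (p - zv c)) = 0"
    by (rule sum.neutral) (use False Yc_iff in \<open>auto simp: indic_def\<close>)
  then show ?thesis using False by (simp add: indic_def)
next
  case True
  have bnd: "0 \<le> p$i \<and> p$i \<le> real B" for i :: 'e
  proof -
    have "p$i = (\<Sum>j\<in>{i}. p$j)" by simp
    also have "\<dots> \<le> of_int (f {i})" using True unfolding PP_def by blast
    also have "\<dots> \<le> of_int (f UNIV)" using pm_mono[OF f(1), of "{i}" UNIV] by simp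
    also have "\<dots> \<le> real B" using f(2) by simp
    finally show ?thesis using True by (auto simp: PP_def)
  qed
  have "(\<Sum>c\<in>PiE UNIV (\<lambda>_. Ch B). sgnc c * indic (Yc f c) (p - zv c))
      = (\<Sum>c\<in>PiE UNIV (\<lambda>_. Ch B). \<Prod>i\<in>(UNIV::'e set). sg (c i) * (if cellm (c i) (p$i) then 1 else 0))"
  proof (rule sum.cong)
    fix c :: "'e \<Rightarrow> int \<times> bool" assume c: "c \<in> PiE UNIV (\<lambda>_. Ch B)"
    have "(\<Prod>i\<in>(UNIV::'e set). sg (c i) * (if cellm (c i) (p$i) then 1 else 0))
        = sgnc c * (\<Prod>i\<in>(UNIV::'e set). (if cellm (c i) (p$i) then 1 else 0))"
      by (simp add: sgnc_def prod.distrib)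
    also have "\<dots> = sgnc c * indic (Yc f c) (p - zv c)"
      using Yc_iff[OF c, of p f] True by (simp add: prod_ind indic_def)
    finally show "sgnc c * indic (Yc f c) (p - zv c) = (\<Prod>i\<in>(UNIV::'e set). sg (c i) * (if cellm (c i) (p$i) then 1 else 0))" by simp
  qed simp
  also have "\<dots> = (\<Prod>i\<in>(UNIV::'e set). \<Sum>ch\<in>Ch B. sg ch * (if cellm ch (p$i) then 1 else 0))"
    by (rule prod_sum_PiE[symmetric]) (auto simp: Ch_def)
  also have "\<dots> = 1" using coord_sum bnd by simp
  finally show ?thesis using True by (simp add: indic_def)
qed

lemma Yc_matroid:
  fixes f :: "'e::finite set \<Rightarrow> int"
  assumes f: "pm f" "f UNIV \<le> int B" and c: "c \<in> PiE UNIV (\<lambda>_. Ch B)"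
    and ne: "Yc f c \<noteq> {}" and c0: "c \<noteq> (\<lambda>_. (0, True))"
  shows "\<exists>M. matroid UNIV M \<and> indep_polytope M = Yc f c \<and> M UNIV < B"
proof -
  define h where "h = (\<lambda>S. f S - (\<Sum>i\<in>S. fst (c i)))"
  define T where "T = {i. snd (c i)}"
  define q where "q = cvl (upc h) T"
  define M where "M = (\<lambda>U. nat (q U))"
  have hsub: "h (A \<union> B') + h (A \<inter> B') \<le> h A + h B'" for A B'
    using pm_sub[OF f(1), of A B'] sum.union_inter[of A B' "\<lambda>i. fst (c i)"]
    unfolding h_def by simp
  obtain y0 where y0: "y0 \<in> Yc f c" using ne by blast
  have hnn: "0 \<le> h S" for S
  proof -
    have "0 \<le> (\<Sum>i\<in>S. y0$i)" using y0 unfolding Yc_def by (auto intro: sum_nonneg)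
    moreover have "(\<Sum>i\<in>S. y0$i) + of_int (\<Sum>i\<in>S. fst (c i)) \<le> of_int (f S)"
      using y0 unfolding Yc_def by blast
    ultimately have "real_of_int (\<Sum>i\<in>S. fst (c i)) \<le> of_int (f S)" by linarith
    then show ?thesis unfolding h_def of_int_le_iff by simp
  qed
  have pu: "pm (upc h)" by (rule upc_pm) (use hsub hnn in auto)
  have pq: "pm q" unfolding q_def by (rule cvl_pm[OF pu])
  have poly: "polymatroid UNIV M" unfolding M_def by (rule pm_nat(1)[OF pq])
  have sing: "\<forall>j\<in>UNIV. M {j} \<le> 1" unfolding M_def q_def using cvl_single[OF pu] by (simp add: nat_le_iff)
  have mat: "matroid UNIV M" using poly sing by (simp add: matroid_def)
  have "indep_polytope M = PP q" unfolding M_def by (rule pm_nat(2)[OF pq])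
  also have "\<dots> = PP (upc h) \<inter> {y. \<forall>i. y$i \<le> (if i \<in> T then 1 else 0)}"
    unfolding q_def by (rule cvl_PP[OF pu])
  also have "\<dots> = Yc f c"
  proof -
    have "\<And>y S. ((\<Sum>i\<in>S. y$i) \<le> real_of_int (h S)) = ((\<Sum>i\<in>S. y$i) + of_int (\<Sum>i\<in>S. fst (c i)) \<le> of_int (f S))"
      unfolding h_def by (simp add: algebra_simps)
    then show ?thesis unfolding upc_PP[OF hnn] Yc_def T_def by auto
  qed
  finally have ip: "indep_polytope M = Yc f c" .
  obtain i where i: "c i \<noteq> (0, True)" using c0 by auto
  have ci: "c i \<in> Ch B" using c by (auto simp: PiE_iff)
  have zi: "1 \<le> fst (c i)" using i ci unfolding Ch_def by auto
  have "fst (c i) \<le> (\<Sum>j\<in>UNIV. fst (c j))"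
    by (rule member_le_sum) (use Cs_fst[OF c] in auto)
  then have hU: "h UNIV \<le> int B - 1" using zi f(2) unfolding h_def by simp
  have "M UNIV \<le> nat (h UNIV)"
  proof -
    have "q UNIV \<le> upc h UNIV" unfolding q_def by (rule cvl_top)
    also have "\<dots> \<le> h UNIV" by (rule upc_le) auto
    finally show ?thesis unfolding M_def by simp
  qed
  then have "M UNIV < B" using hU hnn[of UNIV] by linarith
  then show ?thesis using mat ip by blast
qed

lemma ms_eq:
  fixes \<pi> :: "'e::finite \<Rightarrow> nat" and rk :: "nat set \<Rightarrow> nat"
  assumes pi: "\<pi> ` UNIV \<subseteq> {1..m}" and P: "polymatroid {1..m} rk"
  shows "indep_polytope (multisym_lift {1..m} \<pi> rk) =
     Yc (\<lambda>S. int (rk (\<pi> ` S))) (\<lambda>_. (0, True))"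
proof -
  define X where "X = (\<lambda>U. (\<lambda>A. rk A + card (U - \<pi> -` A)) ` Pow {1..m})"
  have ms: "multisym_lift {1..m} \<pi> rk U = Min (X U)" for U
    unfolding multisym_lift_def X_def by (rule arg_cong[where f=Min]) auto
  have finX: "finite (X U)" "X U \<noteq> {}" for U unfolding X_def by auto
  have mono: "rk A \<le> rk B'" if "A \<subseteq> B'" "B' \<subseteq> {1..m}" for A B'
    using P that unfolding polymatroid_def by blast
  have rk0: "rk {} = 0" using P unfolding polymatroid_def by blast
  show ?thesis
  proof (intro equalityI subsetI)
    fix y :: "real^'e" assume y: "y \<in> indep_polytope (multisym_lift {1..m} \<pi> rk)"
    have le: "(\<Sum>i\<in>U. y$i) \<le> real (Min (X U))" for U
      using y ms unfolding indep_polytope_def by auto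
    have a: "y$i \<le> 1" for i
    proof -
      have "y$i \<le> real (Min (X {i}))" using le[of "{i}"] by simp
      also have "Min (X {i}) \<le> rk {} + card ({i} - \<pi> -` {})"
      proof -
        have "rk {} + card ({i} - \<pi> -` {}) \<in> X {i}" unfolding X_def
          by (rule image_eqI[where x="{}"]) auto
        then show ?thesis by (rule Min_le[OF finX(1)])
      qed
      finally show ?thesis using rk0 by simp
    qed
    have b: "(\<Sum>i\<in>S. y$i) \<le> real (rk (\<pi> ` S))" for S
    proof -
      have "Min (X S) \<le> rk (\<pi> ` S) + card (S - \<pi> -` (\<pi> ` S))" unfolding X_def
        by (rule Min_le) (use pi in auto)
      moreover have "S - \<pi> -` (\<pi> ` S) = {}" by auto
      ultimately have "Min (X S) \<le> rk (\<pi> ` S)" by simp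
      then have "real (Min (X S)) \<le> real (rk (\<pi> ` S))" by (simp only: of_nat_le_iff)
      then show ?thesis using le[of S] by linarith
    qed
    show "y \<in> Yc (\<lambda>S. int (rk (\<pi> ` S))) (\<lambda>_. (0, True))"
      using y a b unfolding Yc_def indep_polytope_def by auto
  next
    fix y :: "real^'e" assume y: "y \<in> Yc (\<lambda>S. int (rk (\<pi> ` S))) (\<lambda>_. (0, True))"
    have y0: "0 \<le> y$i" "y$i \<le> 1" for i using y unfolding Yc_def by auto
    have yS: "(\<Sum>i\<in>S. y$i) \<le> real (rk (\<pi> ` S))" for S using y unfolding Yc_def by auto
    have "(\<Sum>i\<in>U. y$i) \<le> real (multisym_lift {1..m} \<pi> rk U)" for U
    proof -
      have "Min (X U) \<in> X U" using finX by (rule Min_in)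
      then obtain A where A: "A \<subseteq> {1..m}" "Min (X U) = rk A + card (U - \<pi> -` A)"
        unfolding X_def by auto
      have "(\<Sum>i\<in>U. y$i) = (\<Sum>i\<in>U \<inter> \<pi> -` A. y$i) + (\<Sum>i\<in>U - \<pi> -` A. y$i)"
        by (metis finite sum.Int_Diff)
      also have "(\<Sum>i\<in>U \<inter> \<pi> -` A. y$i) \<le> real (rk (\<pi> ` (U \<inter> \<pi> -` A)))" by (rule yS)
      also have "\<dots> \<le> real (rk A)" using mono[of "\<pi> ` (U \<inter> \<pi> -` A)" A] A(1) by auto
      also have "(\<Sum>i\<in>U - \<pi> -` A. y$i) \<le> (\<Sum>i\<in>U - \<pi> -` A. 1)" using y0 by (intro sum_mono) auto
      also have "\<dots> = real (card (U - \<pi> -` A))" by simp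
      finally show ?thesis using A(2) ms[of U] by simp
    qed
    then show "y \<in> indep_polytope (multisym_lift {1..m} \<pi> rk)"
      using y0 unfolding indep_polytope_def by auto
  qed
qed

lemma indic_shift: "indic ((\<lambda>y. y + u) ` Q) x = indic Q (x - u)"
proof -
  have "x \<in> (\<lambda>y. y + u) ` Q \<longleftrightarrow> x - u \<in> Q"
    by (auto simp: image_iff) (metis diff_add_cancel)
  then show ?thesis by (simp add: indic_def)
qed

lemma rel_sum:
  fixes Q :: "nat \<Rightarrow> (real^'e::finite) set"
  assumes "\<And>k. k < N \<Longrightarrow> stell_admissible (Q k) \<and> integral_vec (u k)"
  shows "(\<lambda>x. \<Sum>k<N. a k * (indic (Q k) x - indic ((\<lambda>y. y + u k) ` Q k) x)) \<in> stell_translation_rel"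
  using assms
proof (induction N)
  case 0
  then show ?case using stell_translation_rel.zero by simp
next
  case (Suc N)
  have "(\<lambda>x. \<Sum>k<N. a k * (indic (Q k) x - indic ((\<lambda>y. y + u k) ` Q k) x)) \<in> stell_translation_rel"
    using Suc by auto
  from stell_translation_rel.step[OF this, of "Q N" "u N" "a N"]
  show ?case using Suc.prems by simp
qed

theorem proposition4p5:
  fixes m :: nat and \<pi> :: "'e::finite \<Rightarrow> nat" and rk :: "nat set \<Rightarrow> nat"
  assumes "\<pi> ` UNIV \<subseteq> {1..m}"
    and "polymatroid {1..m} rk"
    and "rk {1..m} \<le> CARD('e)"
  shows "\<exists>N (a :: nat \<Rightarrow> int) (Ms :: nat \<Rightarrow> ('e set \<Rightarrow> nat)).
           (\<forall>k<N. matroid UNIV (Ms k) \<and> Ms k UNIV < rk {1..m}) \<and>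
           (\<lambda>x. indic (indep_polytope (expansion \<pi> rk)) x
                 - indic (indep_polytope (multisym_lift {1..m} \<pi> rk)) x
                 - (\<Sum>k<N. a k * indic (indep_polytope (Ms k)) x))
             \<in> stell_translation_rel"
proof -
  note pi = assms(1) and P = assms(2)
  define f :: "'e set \<Rightarrow> int" where "f = (\<lambda>S. int (rk (\<pi> ` S)))"
  define B where "B = rk {1..m}"
  have rk0: "rk {} = 0" using P unfolding polymatroid_def by blast
  have rmono: "rk A \<le> rk A'" if "A \<subseteq> A'" "A' \<subseteq> {1..m}" for A A'
    using P that unfolding polymatroid_def by blast
  have rsub: "rk (A \<union> A') + rk (A \<inter> A') \<le> rk A + rk A'" if "A \<subseteq> {1..m}" "A' \<subseteq> {1..m}" for A A'
    using P that unfolding polymatroid_def by blast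
  have imsub: "\<pi> ` S \<subseteq> {1..m}" for S using pi by auto
  have pmf: "pm f"
    unfolding pm_def f_def
  proof (intro conjI allI impI)
    show "int (rk (\<pi> ` {})) = 0" using rk0 by simp
    fix A A' :: "'e set"
    show "A \<subseteq> A' \<Longrightarrow> int (rk (\<pi> ` A)) \<le> int (rk (\<pi> ` A'))"
      using rmono[OF image_mono imsub] by simp
    have "rk (\<pi> ` (A \<inter> A')) \<le> rk (\<pi> ` A \<inter> \<pi> ` A')" using imsub by (intro rmono) auto
    moreover have "\<pi> ` (A \<union> A') = \<pi> ` A \<union> \<pi> ` A'" by auto
    ultimately show "int (rk (\<pi> ` (A \<union> A'))) + int (rk (\<pi> ` (A \<inter> A'))) \<le> int (rk (\<pi> ` A)) + int (rk (\<pi> ` A'))"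
      using rsub[OF imsub imsub, of A A'] by simp
  qed
  have fB: "f UNIV \<le> int B" unfolding f_def B_def using rmono[OF imsub] by simp
  define Cs where "Cs = PiE (UNIV::'e set) (\<lambda>_. Ch B)"
  define c0 :: "'e \<Rightarrow> int \<times> bool" where "c0 = (\<lambda>_. (0, True))"
  have c0Cs: "c0 \<in> Cs" unfolding Cs_def c0_def Ch_def by (auto simp: PiE_iff)
  have finCs: "finite Cs" unfolding Cs_def Ch_def by (intro finite_PiE) auto
  define G where "G = {c \<in> Cs - {c0}. Yc f c \<noteq> {}}"
  have finG: "finite G" using finCs unfolding G_def by auto
  define N where "N = card G"
  obtain e where e: "bij_betw e {0..<N} G" unfolding N_def using ex_bij_betw_nat_finite[OF finG] by blast
  define Mc where "Mc = (\<lambda>c. SOME M. matroid UNIV M \<and> indep_polytope M = Yc f c \<and> M UNIV < B)"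
  have Mc: "matroid UNIV (Mc c) \<and> indep_polytope (Mc c) = Yc f c \<and> Mc c UNIV < B" if "c \<in> G" for c
  proof -
    have "\<exists>M. matroid UNIV M \<and> indep_polytope M = Yc f c \<and> M UNIV < B"
      using that Yc_matroid[OF pmf fB, of c] unfolding G_def Cs_def c0_def by auto
    then show ?thesis unfolding Mc_def by (rule someI_ex)
  qed
  have eG: "e k \<in> G" if "k < N" for k using e that by (auto simp: bij_betw_def)
  define a where "a = (\<lambda>k. sgnc (e k))"
  define Ms where "Ms = (\<lambda>k. Mc (e k))"
  define Q where "Q = (\<lambda>k. Yc f (e k))"
  define u where "u = (\<lambda>k. zv (e k))"
  have part1: "\<forall>k<N. matroid UNIV (Ms k) \<and> Ms k UNIV < rk {1..m}"
    using Mc eG unfolding Ms_def B_def by blast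
  have adm: "stell_admissible (Q k) \<and> integral_vec (u k)" if "k < N" for k
  proof
    have "Q k = indep_polytope (Ms k)" using Mc[OF eG[OF that]] unfolding Q_def Ms_def by simp
    moreover have "polymatroid UNIV (Ms k)" using part1 that unfolding matroid_def by blast
    ultimately show "stell_admissible (Q k)" using indep_admissible by simp
    show "integral_vec (u k)" unfolding integral_vec_def u_def zv_def by auto
  qed
  have rel: "(\<lambda>x. \<Sum>k<N. (- a k) * (indic (Q k) x - indic ((\<lambda>y. y + u k) ` Q k) x)) \<in> stell_translation_rel"
    by (rule rel_sum) (use adm in blast)
  have exp_eq: "indep_polytope (expansion \<pi> rk) = PP f"
    by (simp add: indep_polytope_def PP_def expansion_def f_def)
  have ms: "indep_polytope (multisym_lift {1..m} \<pi> rk) = Yc f c0"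
    unfolding f_def c0_def by (rule ms_eq[OF pi P])
  have zc0: "zv c0 = 0" by (simp add: zv_def c0_def vec_eq_iff)
  have sc0: "sgnc c0 = 1" by (simp add: sgnc_def c0_def sg_def)
  have fun_eq: "(\<lambda>x. indic (indep_polytope (expansion \<pi> rk)) x
                 - indic (indep_polytope (multisym_lift {1..m} \<pi> rk)) x
                 - (\<Sum>k<N. a k * indic (indep_polytope (Ms k)) x))
     = (\<lambda>x. \<Sum>k<N. (- a k) * (indic (Q k) x - indic ((\<lambda>y. y + u k) ` Q k) x))"
  proof
    fix x
    have "indic (PP f) x = (\<Sum>c\<in>Cs. sgnc c * indic (Yc f c) (x - zv c))"
      unfolding Cs_def by (rule identity[OF pmf fB])
    also have "\<dots> = sgnc c0 * indic (Yc f c0) (x - zv c0) + (\<Sum>c\<in>Cs - {c0}. sgnc c * indic (Yc f c) (x - zv c))"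
      using finCs c0Cs by (rule sum.remove)
    also have "(\<Sum>c\<in>Cs - {c0}. sgnc c * indic (Yc f c) (x - zv c)) = (\<Sum>c\<in>G. sgnc c * indic (Yc f c) (x - zv c))"
      by (rule sum.mono_neutral_right) (use finCs in \<open>auto simp: G_def indic_def\<close>)
    also have "\<dots> = (\<Sum>k\<in>{0..<N}. sgnc (e k) * indic (Yc f (e k)) (x - zv (e k)))"
      by (rule sum.reindex_bij_betw[OF e, symmetric])
    finally have 1: "indic (PP f) x = indic (Yc f c0) x + (\<Sum>k<N. a k * indic (Q k) (x - u k))"
      unfolding zc0 sc0 a_def Q_def u_def by (simp add: atLeast0LessThan)
    have 2: "(\<Sum>k<N. a k * indic (indep_polytope (Ms k)) x) = (\<Sum>k<N. a k * indic (Q k) x)"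
      by (rule sum.cong) (use Mc eG in \<open>auto simp: Ms_def Q_def\<close>)
    have "indic (PP f) x - indic (Yc f c0) x - (\<Sum>k<N. a k * indic (Q k) x)
        = (\<Sum>k<N. a k * indic (Q k) (x - u k)) - (\<Sum>k<N. a k * indic (Q k) x)"
      using 1 by simp
    also have "\<dots> = (\<Sum>k<N. (- a k) * (indic (Q k) x - indic ((\<lambda>y. y + u k) ` Q k) x))"
      by (simp add: sum_subtractf[symmetric] indic_shift algebra_simps)
    finally show "indic (indep_polytope (expansion \<pi> rk)) x
                 - indic (indep_polytope (multisym_lift {1..m} \<pi> rk)) x
                 - (\<Sum>k<N. a k * indic (indep_polytope (Ms k)) x)
       = (\<Sum>k<N. (- a k) * (indic (Q k) x - indic ((\<lambda>y. y + u k) ` Q k) x))"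
      unfolding exp_eq ms 2 .
  qed
  show ?thesis
    by (rule exI[of _ N], rule exI[of _ a], rule exI[of _ Ms]) (use part1 rel fun_eq in simp)
qed

end
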